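(* Let $\sim$ be an analytic equivalence relation on the Cantor set $\{0,1\}^{\mathbb{N}}$ (i.e. $\sim$ is an analytic subset of $\{0,1\}^{\mathbb{N}}\times\{0,1\}^{\mathbb{N}}$) with the property that whenever $\alpha,\beta\in\{0,1\}^{\mathbb{N}}$ differ at exactly one coordinate, $\alpha\not\sim\beta$. Then $\sim$ is a meager subset of $\{0,1\}^{\mathbb{N}}\times\{0,1\}^{\mathbb{N}}$, and $\sim$ has uncountably many equivalence classes.
   Context: The Cantor set $\{0,1\}^{\mathbb{N}}$ carries the product topology with $\{0,1\}$ discrete. A space is Polish if it is separable and completely metrizable. If $Y$ is Polish, a set $A\subseteq Y$ is analytic if there is a Polish space $Z$ and a closed set $D\subseteq Y\times Z$ such that $A$ is the projection of $D$ to $Y$. A set is meager if it is a countable union of nowhere dense sets. *)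

theory Defs
  imports "HOL-Analysis.Analysis"
begin

text \<open>The Cantor set is the type nat \<Rightarrow> bool with the product topology
  (Function_Topology); bool carries its order topology, which is discrete.\<close>

type_synonym cantor = "nat \<Rightarrow> bool"

definition Polish_space :: "'a topology \<Rightarrow> bool" where
  "Polish_space Z \<longleftrightarrow> completely_metrizable_space Z \<and> separable_space Z"

definition nowhere_dense :: "'a::topological_space set \<Rightarrow> bool" where
  "nowhere_dense S \<longleftrightarrow> interior (closure S) = {}"

definition meager :: "'a::topological_space set \<Rightarrow> bool" where
  "meager S \<longleftrightarrow> (\<exists>F. countable F \<and> (\<forall>N\<in>F. nowhere_dense N) \<and> S = \<Union>F)"

end

theory Submission
  imports Defs
begin


instance bool :: second_countable_topology
proof
  show "\<exists>B::bool set set. countable B \<and> open = generate_topology B"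
  proof (intro exI conjI)
    show "countable (UNIV :: bool set set)" by simp
    show "open = generate_topology (UNIV :: bool set set)"
    proof (rule ext)
      fix S :: "bool set"
      show "open S = generate_topology UNIV S" using open_discrete[of S] generate_topology.Basis[of S UNIV] by simp
    qed
  qed
qed


lemma nowhere_dense_subset: "nowhere_dense S \<Longrightarrow> T \<subseteq> S \<Longrightarrow> nowhere_dense T"
  unfolding nowhere_dense_def by (metis closure_mono interior_mono subset_empty)

lemma meager_subset: assumes "meager S" "T \<subseteq> S" shows "meager T"
proof -
  obtain F where F: "countable F" "\<forall>N\<in>F. nowhere_dense N" "S = \<Union>F"
    using assms(1) unfolding meager_def by blast
  show ?thesis unfolding meager_def
  proof (intro exI conjI)
    show "countable ((\<lambda>N. N \<inter> T) ` F)" using F by simp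
    show "\<forall>N\<in>(\<lambda>N. N \<inter> T) ` F. nowhere_dense N" using F nowhere_dense_subset by blast
    show "T = \<Union>((\<lambda>N. N \<inter> T) ` F)" using F assms(2) by blast
  qed
qed

lemma meager_empty: "meager {}"
  unfolding meager_def by (intro exI[of _ "{}"]) auto

lemma meager_UN:
  assumes "countable I" "\<And>i. i \<in> I \<Longrightarrow> meager (A i)"
  shows "meager (\<Union>i\<in>I. A i)"
proof -
  have "\<forall>i\<in>I. \<exists>F. countable F \<and> (\<forall>N\<in>F. nowhere_dense N) \<and> A i = \<Union>F"
    using assms(2) unfolding meager_def by blast
  then obtain F where F: "\<And>i. i \<in> I \<Longrightarrow> countable (F i) \<and> (\<forall>N\<in>F i. nowhere_dense N) \<and> A i = \<Union>(F i)"
    by metis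
  show ?thesis unfolding meager_def
    apply (intro exI[of _ "\<Union>i\<in>I. F i"] conjI)
    using F assms(1) by auto
qed

lemma meager_Un: "meager A \<Longrightarrow> meager B \<Longrightarrow> meager (A \<union> B)"
proof -
  assume "meager A" "meager B"
  then have "meager (\<Union>b\<in>{True,False}. if b then A else B)" by (intro meager_UN) auto
  moreover have "(\<Union>b\<in>{True,False}. if b then A else B) = A \<union> B" by auto
  ultimately show ?thesis by simp
qed

lemma nowhere_dense_closed_diff: "closed C \<Longrightarrow> nowhere_dense (C - interior C)"
proof -
  assume c: "closed C"
  have cl: "closed (C - interior C)" using c by (simp add: closed_Diff)
  have "interior (C - interior C) \<subseteq> interior C"
    by (simp add: interior_mono)
  moreover have "interior (C - interior C) \<subseteq> C - interior C" by (rule interior_subset)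
  ultimately have "interior (C - interior C) = {}" by blast
  then show ?thesis unfolding nowhere_dense_def using cl closure_closed by metis
qed

lemma meager_nowhere_dense: "nowhere_dense N \<Longrightarrow> meager N"
  unfolding meager_def by (intro exI[of _ "{N}"]) auto

definition BP :: "'a::topological_space set \<Rightarrow> bool" where
  "BP A \<longleftrightarrow> (\<exists>U. open U \<and> meager ((A - U) \<union> (U - A)))"

lemma BP_meager: "meager A \<Longrightarrow> BP A"
  unfolding BP_def by (intro exI[of _ "{}"]) auto

lemma BP_closed: "closed C \<Longrightarrow> BP C"
  unfolding BP_def
proof (intro exI[of _ "interior C"] conjI)
  assume c: "closed C"
  have "(C - interior C) \<union> (interior C - C) = C - interior C" using interior_subset[of C] by blast
  then show "meager ((C - interior C) \<union> (interior C - C))"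
    using nowhere_dense_closed_diff[OF c] meager_nowhere_dense by simp
qed simp

lemma BP_Compl: assumes "BP A" shows "BP (- A)"
proof -
  obtain U where U: "open U" "meager ((A - U) \<union> (U - A))" using assms BP_def by blast
  have c: "closed (- U)" using U by auto
  have m2: "meager ((- U) - interior (- U))"
    using nowhere_dense_closed_diff[OF c] meager_nowhere_dense by blast
  have "(- A - interior (- U)) \<union> (interior (- U) - (- A)) \<subseteq> ((A - U) \<union> (U - A)) \<union> ((- U) - interior (- U))"
    using interior_subset[of "- U"] by blast
  then show ?thesis unfolding BP_def
  proof (intro exI[of _ "interior (- U)"] conjI)
    show "meager (- A - interior (- U) \<union> (interior (- U) - - A))"
      using meager_subset[OF meager_Un[OF U(2) m2]] \<open>_ \<subseteq> _\<close> by blast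
  qed simp
qed

lemma BP_UN:
  assumes "countable I" "\<And>i. i \<in> I \<Longrightarrow> BP (A i)"
  shows "BP (\<Union>i\<in>I. A i)"
proof -
  obtain U where U: "\<And>i. i \<in> I \<Longrightarrow> open (U i) \<and> meager ((A i - U i) \<union> (U i - A i))"
    using assms(2) unfolding BP_def by metis
  have "((\<Union>i\<in>I. A i) - (\<Union>i\<in>I. U i)) \<union> ((\<Union>i\<in>I. U i) - (\<Union>i\<in>I. A i)) \<subseteq> (\<Union>i\<in>I. (A i - U i) \<union> (U i - A i))"
    by blast
  moreover have "meager (\<Union>i\<in>I. (A i - U i) \<union> (U i - A i))"
    by (rule meager_UN[OF assms(1)]) (use U in blast)
  ultimately have "meager (((\<Union>i\<in>I. A i) - (\<Union>i\<in>I. U i)) \<union> ((\<Union>i\<in>I. U i) - (\<Union>i\<in>I. A i)))"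
    by (rule meager_subset[rotated])
  moreover have "open (\<Union>i\<in>I. U i)" using U by blast
  ultimately show ?thesis unfolding BP_def by blast
qed

lemma BP_Un: "BP A \<Longrightarrow> BP B \<Longrightarrow> BP (A \<union> B)"
proof -
  assume "BP A" "BP B"
  then have "BP (\<Union>b\<in>{True,False}. if b then A else B)" by (intro BP_UN) auto
  moreover have "(\<Union>b\<in>{True,False}. if b then A else B) = A \<union> B" by auto
  ultimately show ?thesis by simp
qed

lemma BP_Diff: "BP A \<Longrightarrow> BP B \<Longrightarrow> BP (A - B)"
proof -
  assume "BP A" "BP B"
  then have "BP (- (- A \<union> B))" by (intro BP_Compl BP_Un) auto
  moreover have "- (- A \<union> B) = A - B" by blast
  ultimately show ?thesis by simp
qed

lemma BP_Int: "BP A \<Longrightarrow> BP B \<Longrightarrow> BP (A \<inter> B)"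
  using BP_Diff[of A "- B"] BP_Compl[of B] by (simp add: Diff_eq)

lemma BP_hull:
  fixes A :: "'a::second_countable_topology set"
  shows "\<exists>H. A \<subseteq> H \<and> BP H \<and> (\<forall>C. C \<subseteq> H - A \<longrightarrow> BP C \<longrightarrow> meager C)"
proof -
  obtain B :: "'a set set" where B: "countable B" "topological_basis B"
    using ex_countable_basis by blast
  define U where "U = \<Union>{V\<in>B. meager (V \<inter> A)}"
  have oU: "open U" unfolding U_def using B(2) topological_basis_open by blast
  have mAU: "meager (A \<inter> U)"
  proof -
    have "A \<inter> U = (\<Union>V\<in>{V\<in>B. meager (V \<inter> A)}. V \<inter> A)" unfolding U_def by blast
    moreover have "meager (\<Union>V\<in>{V\<in>B. meager (V \<inter> A)}. V \<inter> A)"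
      by (rule meager_UN) (use B(1) in auto)
    ultimately show ?thesis by simp
  qed
  define H where "H = - U \<union> (A \<inter> U)"
  have "A \<subseteq> H" unfolding H_def by blast
  moreover have "BP H" unfolding H_def
    by (intro BP_Un BP_closed BP_meager mAU) (use oU in auto)
  moreover have "meager C" if C: "C \<subseteq> H - A" "BP C" for C
  proof -
    obtain W where W: "open W" "meager ((C - W) \<union> (W - C))" using C(2) BP_def by blast
    have "W \<subseteq> U"
    proof
      fix x assume "x \<in> W"
      then obtain V where V: "V \<in> B" "x \<in> V" "V \<subseteq> W"
        using B(2) W(1) topological_basisE by metis
      have "V \<inter> A \<subseteq> (C - W) \<union> (W - C)" using V C(1) by blast
      then have "meager (V \<inter> A)" using W(2) meager_subset by blast
      then show "x \<in> U" unfolding U_def using V by blast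
    qed
    then have "C \<subseteq> (C - W) \<union> (W - C)" using C(1) unfolding H_def by blast
    then show ?thesis using W(2) meager_subset by blast
  qed
  ultimately show ?thesis by blast
qed

lemma suslin_BP:
  fixes A K :: "nat list \<Rightarrow> 'a::second_countable_topology set"
  assumes split: "\<And>s. A s \<subseteq> (\<Union>i. A (s @ [i]))"
    and AK: "\<And>s. A s \<subseteq> K s" and BPK: "\<And>s. BP (K s)"
    and close: "\<And>x f. f 0 = [] \<Longrightarrow> (\<forall>n. \<exists>i. f (Suc n) = f n @ [i]) \<Longrightarrow> (\<forall>n. x \<in> K (f n)) \<Longrightarrow> x \<in> A []"
  shows "BP (A [])"
proof -
  have "\<forall>s. \<exists>H. A s \<subseteq> H \<and> BP H \<and> (\<forall>C. C \<subseteq> H - A s \<longrightarrow> BP C \<longrightarrow> meager C)"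
    using BP_hull by blast
  then obtain h where h: "\<And>s. A s \<subseteq> h s \<and> BP (h s) \<and> (\<forall>C. C \<subseteq> h s - A s \<longrightarrow> BP C \<longrightarrow> meager C)"
    by metis
  define H where "H s = h s \<inter> K s" for s
  have BPH: "BP (H s)" for s unfolding H_def using h BPK BP_Int by blast
  have AH: "A s \<subseteq> H s" for s unfolding H_def using h AK by blast
  define M where "M s = H s - (\<Union>i. H (s @ [i]))" for s
  have mM: "meager (M s)" for s
  proof -
    have "BP (M s)" unfolding M_def
      by (intro BP_Diff BPH BP_UN) auto
    moreover have "M s \<subseteq> h s - A s"
    proof -
      have "(\<Union>i. A (s @ [i])) \<subseteq> (\<Union>i. H (s @ [i]))" by (rule UN_mono) (simp_all add: AH)
      then have "A s \<subseteq> (\<Union>i. H (s @ [i]))" using split[of s] by (rule order_trans[rotated])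
      then show ?thesis unfolding M_def H_def by blast
    qed
    ultimately show ?thesis using h by blast
  qed
  have mMM: "meager (\<Union>s. M s)" by (rule meager_UN) (auto simp: mM)
  have sub: "H [] - (\<Union>s. M s) \<subseteq> A []"
  proof
    fix x assume x: "x \<in> H [] - (\<Union>s. M s)"
    have step: "x \<in> H s \<Longrightarrow> \<exists>i. x \<in> H (s @ [i])" for s
      using x unfolding M_def by blast
    define f where "f = rec_nat [] (\<lambda>n fs. fs @ [SOME i. x \<in> H (fs @ [i])])"
    have f0: "f 0 = []" unfolding f_def by simp
    have fS: "f (Suc n) = f n @ [SOME i. x \<in> H (f n @ [i])]" for n unfolding f_def by simp
    have xf: "x \<in> H (f n)" for n
    proof (induction n)
      case 0 then show ?case using x f0 by simp
    next
      case (Suc n) then show ?case using step[of "f n"] fS[of n] by (metis someI_ex)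
    qed
    show "x \<in> A []"
      apply (rule close[of f])
      using f0 fS xf unfolding H_def by blast+
  qed
  have "A [] = H [] - (H [] - A [])" using AH by blast
  moreover have "BP (H [] - A [])"
  proof -
    have "H [] - A [] \<subseteq> (\<Union>s. M s)" using sub by blast
    then show ?thesis using mMM meager_subset BP_meager by blast
  qed
  ultimately show ?thesis using BP_Diff BPH by metis
qed



lemma analytic_BP:
  fixes D :: "('a::second_countable_topology \<times> 'z) set" and Z :: "'z topology"
  assumes P: "Polish_space Z" and cD: "closedin (prod_topology euclidean Z) D"
  shows "BP (fst ` D)"
proof -
  obtain M d where Md: "Metric_space M d" "Metric_space.mcomplete M d" "Z = Metric_space.mtopology M d"
    using P unfolding Polish_space_def completely_metrizable_space_def by blast
  interpret Metric_space M d by (rule Md(1))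
  obtain C where C: "countable C" "C \<subseteq> M" "mtopology closure_of C = M"
    using P Md(3) unfolding Polish_space_def separable_space_def by auto
  have Dsub: "D \<subseteq> UNIV \<times> M" using closedin_subset[OF cD] Md(3) by simp
  show ?thesis
  proof (cases "M = {}")
    case True
    then have "D = {}" using Dsub by blast
    then show ?thesis using BP_meager meager_empty by simp
  next
    case False
    then have "C \<noteq> {}" using C(3) by auto
    define z where "z = from_nat_into C"
    have zC: "z i \<in> C" for i unfolding z_def using \<open>C \<noteq> {}\<close> by (simp add: from_nat_into)
    have zM: "z i \<in> M" for i using zC C(2) by blast
    have dense: "\<exists>i. d (z i) w < e" if "w \<in> M" "e > 0" for w e
    proof -
      have "w \<in> mtopology closure_of C" using C(3) that by simp
      then obtain y where "y \<in> C" "y \<in> mball w e" using \<open>e > 0\<close> unfolding metric_closure_of by blast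
      then obtain i where "y = z i" unfolding z_def using C(1) by (metis from_nat_into_surj)
      then show ?thesis using \<open>y \<in> mball w e\<close> by (auto simp: commute)
    qed
    define Bs where "Bs s = {w \<in> M. \<forall>k<length s. d (z (s!k)) w \<le> (1/2)^k}" for s
    define A where "A s = {x. \<exists>w \<in> Bs s. (x, w) \<in> D}" for s
    have "BP (A [])"
    proof (rule suslin_BP[where K = "\<lambda>s. closure (A s)"])
      show "A s \<subseteq> (\<Union>i. A (s @ [i]))" for s
      proof
        fix x assume "x \<in> A s"
        then obtain w where w: "w \<in> Bs s" "(x, w) \<in> D" unfolding A_def by blast
        obtain i where i: "d (z i) w < (1/2)^(length s)" using dense[of w "(1/2)^(length s)"] w(1)
          unfolding Bs_def by auto
        have "w \<in> Bs (s @ [i])" using w(1) i unfolding Bs_def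
          by (auto simp: nth_append less_Suc_eq)
        then show "x \<in> (\<Union>i. A (s @ [i]))" using w(2) unfolding A_def by blast
      qed
      show "A s \<subseteq> closure (A s)" for s by (rule closure_subset)
      show "BP (closure (A s))" for s by (rule BP_closed) simp
      fix x f
      assume f0: "f 0 = []" and fS: "\<forall>n. \<exists>i. f (Suc n) = f n @ [i]" and xK: "\<forall>n. x \<in> closure (A (f n))"
      define y where "y n = f (Suc n) ! n" for n
      have fy: "f n = map y [0..<n]" for n
      proof (induction n)
        case 0 then show ?case using f0 by simp
      next
        case (Suc n)
        obtain i where i: "f (Suc n) = f n @ [i]" using fS by blast
        have "y n = i" unfolding y_def using i Suc by (simp add: nth_append)
        then show ?case using i Suc by simp
      qed
      define c where "c k = z (y k)" for k
      have cM: "c k \<in> M" for k unfolding c_def using zM by blast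
      have Bsf: "Bs (f n) = {w \<in> M. \<forall>k<n. d (c k) w \<le> (1/2)^k}" for n
        unfolding Bs_def fy c_def by auto
      have nonempty: "\<exists>w. w \<in> Bs (f n) \<and> (\<exists>x'. (x', w) \<in> D)" for n
      proof -
        have "A (f n) \<noteq> {}" using xK[rule_format, of n] by auto
        then show ?thesis unfolding A_def by blast
      qed
      have cd: "d (c k) (c m) \<le> (1/2)^k + (1/2)^m" for k m
      proof -
        obtain w where w: "w \<in> Bs (f (Suc (max k m)))" using nonempty by blast
        then have "w \<in> M" "d (c k) w \<le> (1/2)^k" "d (c m) w \<le> (1/2)^m" unfolding Bsf by auto
        then show ?thesis using triangle[of "c k" w "c m"] cM commute[of "c m" w] by simp
      qed
      have "MCauchy c"
        unfolding MCauchy_def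
      proof (intro conjI allI impI)
        show "range c \<subseteq> M" using cM by blast
        fix e :: real assume "e > 0"
        then obtain N where N: "(1/2)^N < e/2"
          using real_arch_pow_inv[of "e/2" "1/2"] by auto
        show "\<exists>N. \<forall>n n'. N \<le> n \<longrightarrow> N \<le> n' \<longrightarrow> d (c n) (c n') < e"
        proof (intro exI[of _ N] allI impI)
          fix n n' assume "N \<le> n" "N \<le> n'"
          then have "(1/2::real)^n \<le> (1/2)^N" "(1/2::real)^n' \<le> (1/2)^N"
            by (simp_all add: power_decreasing)
          then show "d (c n) (c n') < e" using cd[of n n'] N by linarith
        qed
      qed
      then obtain w where lim: "limitin mtopology c w sequentially"
        using Md(2) unfolding mcomplete_def by blast
      then have lim': "w \<in> M \<and> (\<forall>\<epsilon>>0. \<exists>N. \<forall>n\<ge>N. c n \<in> M \<and> d (c n) w < \<epsilon>)"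
        unfolding limit_metric_sequentially by blast
      then have wM: "w \<in> M" by blast
      have conv: "\<exists>N. \<forall>n\<ge>N. d (c n) w < e" if "e > 0" for e
      proof -
        obtain N where "\<forall>n\<ge>N. c n \<in> M \<and> d (c n) w < e" using lim' \<open>e > 0\<close> by blast
        then show ?thesis by blast
      qed
      have "(x, w) \<in> D"
      proof (rule ccontr)
        assume nD: "(x, w) \<notin> D"
        define T where "T = topspace (prod_topology euclidean Z) - D"
        have oT: "openin (prod_topology euclidean Z) T"
          using cD unfolding T_def by (simp add: closedin_def)
        have xwT: "(x, w) \<in> T" using nD wM Md(3) unfolding T_def by simp
        have "\<forall>a b. (a, b) \<in> T \<longrightarrow> (\<exists>U V. openin euclidean U \<and> openin Z V \<and> a \<in> U \<and> b \<in> V \<and> U \<times> V \<subseteq> T)"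
          using oT by (simp only: openin_prod_topology_alt)
        then have "\<exists>U V. openin euclidean U \<and> openin Z V \<and> x \<in> U \<and> w \<in> V \<and> U \<times> V \<subseteq> T"
          using xwT by blast
        then obtain U V where UV: "openin euclidean U" "openin Z V" "x \<in> U" "w \<in> V" "U \<times> V \<subseteq> T"
          by blast
        have oU: "open U" by (subst open_openin) (rule UV(1))
        obtain r where r: "r > 0" "mball w r \<subseteq> V" using UV(2,4) unfolding Md(3) openin_mtopology by blast
        obtain N1 where N1: "\<forall>n\<ge>N1. d (c n) w < r/2" using conv r(1) by (meson half_gt_zero)
        obtain N2 where N2: "(1/2)^N2 < r/2"
          using real_arch_pow_inv[of "r/2" "1/2"] r(1) by auto
        define m where "m = max N1 N2"
        have "(1/2::real)^m \<le> (1/2)^N2" unfolding m_def by (simp add: power_decreasing)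
        then have hm: "(1/2::real)^m < r/2" using N2 by linarith
        have dm: "d (c m) w < r/2" using N1 unfolding m_def by simp
        have "x \<in> closure (A (f (Suc m)))" using xK by blast
        then obtain x' where x': "x' \<in> U" "x' \<in> A (f (Suc m))"
        proof -
          have "U \<inter> closure (A (f (Suc m))) \<noteq> {}" using \<open>x \<in> closure _\<close> UV(3) by blast
          then have "U \<inter> A (f (Suc m)) \<noteq> {}" using open_Int_closure_eq_empty[OF oU] by blast
          then show ?thesis using that by blast
        qed
        then obtain w' where w': "w' \<in> Bs (f (Suc m))" "(x', w') \<in> D" unfolding A_def by blast
        then have "w' \<in> M" "d (c m) w' \<le> (1/2)^m" unfolding Bsf by auto
        then have "d w w' < r" using triangle[of w "c m" w'] commute[of w "c m"] cM wM dm hm by simp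
        then have "w' \<in> V" using r(2) wM \<open>w' \<in> M\<close> by auto
        then have "(x', w') \<in> T" using UV(5) x'(1) by blast
        then show False using w'(2) unfolding T_def by blast
      qed
      moreover have "w \<in> Bs []" unfolding Bs_def using wM by simp
      ultimately show "x \<in> A []" unfolding A_def by blast
    qed
    moreover have "A [] = fst ` D"
    proof (rule set_eqI)
      fix x
      have "Bs [] = M" by (simp add: Bs_def)
      then have "x \<in> A [] \<longleftrightarrow> (\<exists>w. (x, w) \<in> D)" unfolding A_def using Dsub by blast
      also have "\<dots> \<longleftrightarrow> x \<in> fst ` D" by (simp add: image_iff) (metis fst_conv prod.collapse)
      finally show "x \<in> A [] \<longleftrightarrow> x \<in> fst ` D" .
    qed
    ultimately show ?thesis by simp
  qed
qed



lemma baire_meager: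
  fixes S :: "'a::topological_space set"
  assumes c: "compact_space (euclidean :: 'a topology)" and h: "Hausdorff_space (euclidean :: 'a topology)"
    and m: "meager S"
  shows "interior S = {}"
proof -
  obtain F where F: "countable F" "\<forall>N\<in>F. nowhere_dense N" "S = \<Union>F"
    using m unfolding meager_def by blast
  have "euclidean interior_of \<Union>(closure ` F) = {}"
  proof (rule Baire_category_alt)
    show "completely_metrizable_space (euclidean :: 'a topology) \<or>
          locally_compact_space (euclidean :: 'a topology) \<and> regular_space (euclidean :: 'a topology)"
      using c h compact_imp_locally_compact_space compact_Hausdorff_imp_regular_space by blast
    show "countable (closure ` F)" using F(1) by simp
    show "closedin euclidean T \<and> euclidean interior_of T = {}" if "T \<in> closure ` F" for T
      using that F(2) unfolding nowhere_dense_def by (auto simp: euclidean_interior_of)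
  qed
  then have "interior (\<Union>(closure ` F)) = {}" by (simp add: euclidean_interior_of)
  moreover have "S \<subseteq> \<Union>(closure ` F)" using F(3) closure_subset by blast
  ultimately show ?thesis using interior_mono by blast
qed

lemma nowhere_dense_invol:
  fixes g :: "'a::topological_space \<Rightarrow> 'a"
  assumes cg: "continuous_on UNIV g" and inv: "\<And>x. g (g x) = x" and nd: "nowhere_dense S"
  shows "nowhere_dense (g ` S)"
proof -
  have img: "g ` T = g -` T" for T using inv by (auto simp: image_iff) (metis)
  have cl: "closed (g -` closure S)" using cg by (simp add: closed_vimage)
  have "closure (g ` S) \<subseteq> g -` closure S"
    unfolding img using cl closure_subset by (intro closure_minimal) auto
  then have "interior (closure (g ` S)) \<subseteq> interior (g -` closure S)" by (rule interior_mono)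
  moreover have "interior (g -` closure S) = {}"
  proof -
    define Oi where "Oi = interior (g -` closure S)"
    have "open (g -` Oi)" using cg unfolding Oi_def by (simp add: open_vimage)
    moreover have "g -` Oi \<subseteq> closure S"
    proof
      fix y assume "y \<in> g -` Oi"
      then have "g y \<in> g -` closure S" using interior_subset[of "g -` closure S"] unfolding Oi_def by blast
      then show "y \<in> closure S" using inv by simp
    qed
    ultimately have "g -` Oi \<subseteq> interior (closure S)" by (meson interior_maximal)
    then have "g -` Oi = {}" using nd unfolding nowhere_dense_def by simp
    have "Oi = {}"
    proof (rule equals0I)
      fix y assume "y \<in> Oi"
      then have "g y \<in> g -` Oi" using inv by simp
      then show False using \<open>g -` Oi = {}\<close> by blast
    qed
    then show ?thesis unfolding Oi_def .
  qed
  ultimately show ?thesis unfolding nowhere_dense_def by blast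
qed

lemma meager_invol:
  fixes g :: "'a::topological_space \<Rightarrow> 'a"
  assumes cg: "continuous_on UNIV g" and inv: "\<And>x. g (g x) = x" and m: "meager S"
  shows "meager (g ` S)"
proof -
  obtain F where F: "countable F" "\<forall>N\<in>F. nowhere_dense N" "S = \<Union>F"
    using m unfolding meager_def by blast
  show ?thesis unfolding meager_def
    apply (intro exI[of _ "(\<lambda>N. g ` N) ` F"] conjI)
    using F nowhere_dense_invol[OF cg inv] by auto
qed

lemma flip_contra:
  fixes g :: "'a::topological_space \<Rightarrow> 'a"
  assumes c: "compact_space (euclidean :: 'a topology)" and h: "Hausdorff_space (euclidean :: 'a topology)"
    and cg: "continuous_on UNIV g" and inv: "\<And>x. g (g x) = x"
    and Q: "open Q" "q \<in> Q" and gQ: "\<And>x. x \<in> Q \<Longrightarrow> g x \<in> Q"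
    and S: "\<And>x. x \<in> Q \<Longrightarrow> x \<in> S \<Longrightarrow> g x \<notin> S"
    and m: "meager (Q - S)"
  shows False
proof -
  have "Q \<subseteq> (Q - S) \<union> g ` (Q - S)"
  proof
    fix x assume x: "x \<in> Q"
    show "x \<in> (Q - S) \<union> g ` (Q - S)"
    proof (cases "x \<in> S")
      case True
      then have "g x \<in> Q - S" using x gQ S by blast
      then have "g (g x) \<in> g ` (Q - S)" by blast
      then show ?thesis using inv by simp
    qed (use x in blast)
  qed
  moreover have "meager ((Q - S) \<union> g ` (Q - S))"
    using m meager_invol[OF cg inv m] meager_Un by blast
  ultimately have "meager Q" using meager_subset by blast
  then have "interior Q = {}" using baire_meager[OF c h] by blast
  then show False using Q interior_open by auto
qed

definition cyl :: "nat \<Rightarrow> (nat \<Rightarrow> bool) \<Rightarrow> (nat \<Rightarrow> bool) set" where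
  "cyl N a = {\<alpha>. \<forall>k<N. \<alpha> k = a k}"

lemma open_cyl: "open (cyl N a)"
proof -
  have "cyl N a = Pi\<^sub>E UNIV (\<lambda>k. if k < N then {a k} else UNIV)"
  proof (rule set_eqI)
    fix x
    show "x \<in> cyl N a \<longleftrightarrow> x \<in> Pi\<^sub>E UNIV (\<lambda>k. if k < N then {a k} else UNIV)"
      unfolding cyl_def PiE_UNIV_domain Pi_iff mem_Collect_eq
    proof
      assume "\<forall>k<N. x k = a k" then show "\<forall>i\<in>UNIV. x i \<in> (if i < N then {a i} else UNIV)" by simp
    next
      assume h: "\<forall>i\<in>UNIV. x i \<in> (if i < N then {a i} else UNIV)"
      show "\<forall>k<N. x k = a k"
      proof (intro allI impI)
        fix k assume "k < N" with h[rule_format, of k] show "x k = a k" by simp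
      qed
    qed
  qed
  moreover have "open (Pi\<^sub>E UNIV (\<lambda>k. if k < N then {a k} else (UNIV :: bool set)))"
  proof (rule open_PiE)
    show "open (if k < N then {a k} else UNIV)" for k by (simp add: open_discrete)
    show "finite {i. (if i < N then {a i} else UNIV) \<noteq> UNIV}"
      by (rule finite_subset[of _ "{..<N}"]) auto
  qed
  ultimately show ?thesis by simp
qed

lemma cyl_in_open:
  fixes W :: "(nat \<Rightarrow> bool) set"
  assumes "open W" "a \<in> W"
  shows "\<exists>N. cyl N a \<subseteq> W"
proof -
  have "openin (product_topology (\<lambda>i. euclidean) UNIV) W" using assms(1) by (simp add: open_fun_def)
  then obtain U where U: "finite {i. U i \<noteq> (UNIV :: bool set)}" "a \<in> Pi\<^sub>E UNIV U" "Pi\<^sub>E UNIV U \<subseteq> W"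
    using assms(2) unfolding openin_product_topology_alt by auto
  obtain N where N: "\<forall>i\<in>{i. U i \<noteq> UNIV}. i < N"
    using U(1) finite_nat_set_iff_bounded by blast
  have "cyl N a \<subseteq> Pi\<^sub>E UNIV U"
  proof
    fix \<alpha> assume "\<alpha> \<in> cyl N a"
    then have "\<alpha> k \<in> U k" for k using N U(2) unfolding cyl_def PiE_UNIV_domain
      by (cases "k < N") (auto simp: Pi_iff)
    then show "\<alpha> \<in> Pi\<^sub>E UNIV U" unfolding PiE_UNIV_domain by auto
  qed
  then show ?thesis using U(3) by blast
qed

lemma cyl_mono: "N \<le> M \<Longrightarrow> cyl M a \<subseteq> cyl N a"
  unfolding cyl_def by auto

definition flip :: "nat \<Rightarrow> (nat \<Rightarrow> bool) \<Rightarrow> (nat \<Rightarrow> bool)" where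
  "flip n \<alpha> = \<alpha>(n := \<not> \<alpha> n)"

lemma flip_flip [simp]: "flip n (flip n \<alpha>) = \<alpha>"
  unfolding flip_def by auto

lemma flip_cyl: "\<alpha> \<in> cyl N a \<Longrightarrow> flip N \<alpha> \<in> cyl N a"
  unfolding flip_def cyl_def by auto

lemma flip_unique: "\<exists>!n. \<alpha> n \<noteq> flip N \<alpha> n"
  unfolding flip_def by (intro ex1I[of _ N]) (auto split: if_splits)

lemma cont_bool: "continuous_on UNIV (h :: bool \<Rightarrow> bool)"
  by (simp add: continuous_on_open_vimage open_discrete)

lemma continuous_flip: "continuous_on UNIV (flip n)"
proof (rule continuous_on_coordinatewise_then_product)
  fix i
  show "continuous_on UNIV (\<lambda>x. flip n x i)"
  proof (cases "i = n")
    case True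
    have "continuous_on UNIV (Not \<circ> (\<lambda>x :: nat \<Rightarrow> bool. x n))"
      by (rule continuous_on_compose) (auto intro: cont_bool)
    then show ?thesis using True unfolding flip_def by (simp add: o_def)
  next
    case False
    then show ?thesis unfolding flip_def by simp
  qed
qed

lemma cs: "compact_space (euclidean :: (nat \<Rightarrow> bool) topology)"
proof -
  have "compact_space (euclidean :: bool topology)"
    by (simp add: compact_space_def finite_imp_compact)
  then show ?thesis by (metis compact_space_product_topology euclidean_product_topology)
qed

lemma hs: "Hausdorff_space (euclidean :: (nat \<Rightarrow> bool) topology)"
proof -
  have "Hausdorff_space (euclidean :: bool topology)"
    unfolding Hausdorff_space_def
  proof (intro allI impI)
    fix x y :: bool assume "x \<in> topspace euclidean \<and> y \<in> topspace euclidean \<and> x \<noteq> y"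
    then have "x \<noteq> y" by blast
    have o: "openin euclidean {z}" for z :: bool by (subst open_openin[symmetric]) (rule open_discrete)
    show "\<exists>U V. openin euclidean U \<and> openin euclidean V \<and> x \<in> U \<and> y \<in> V \<and> disjnt U V"
      by (intro exI[of _ "{x}"] exI[of _ "{y}"] conjI o) (use \<open>x \<noteq> y\<close> in auto)
  qed
  then show ?thesis by (metis Hausdorff_space_product_topology euclidean_product_topology)
qed

lemma cs2: "compact_space (euclidean :: ((nat \<Rightarrow> bool)\<times>(nat \<Rightarrow> bool)) topology)"
  by (metis cs compact_space_prod_topology prod_topology_euclidean)

lemma hs2: "Hausdorff_space (euclidean :: ((nat \<Rightarrow> bool)\<times>(nat \<Rightarrow> bool)) topology)"
  by (metis hs Hausdorff_space_prod_topology prod_topology_euclidean)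



theorem lemma3p3:
  fixes R :: "(cantor \<times> cantor) set"
    and Z :: "'z topology"
    and D :: "((cantor \<times> cantor) \<times> 'z) set"
  assumes "equiv UNIV R"
    and "Polish_space Z"
    and "closedin (prod_topology (euclidean :: (cantor \<times> cantor) topology) Z) D"
    and "R = fst ` D"
    and "\<And>\<alpha> \<beta>. (\<exists>!n. \<alpha> n \<noteq> \<beta> n) \<Longrightarrow> (\<alpha>, \<beta>) \<notin> R"
  shows "meager R \<and> uncountable (UNIV // R)"
proof -
  have symR: "(x, y) \<in> R \<Longrightarrow> (y, x) \<in> R" for x y
    using assms(1) unfolding equiv_def sym_def by blast
  have transR: "(x, y) \<in> R \<Longrightarrow> (y, z) \<in> R \<Longrightarrow> (x, z) \<in> R" for x y z
    using assms(1) unfolding equiv_def trans_def by blast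
  have hR: "False" if "(\<alpha>, \<beta>) \<in> R" "(\<alpha>, flip N \<beta>) \<in> R" for \<alpha> \<beta> N
  proof -
    have "(\<beta>, flip N \<beta>) \<in> R" using symR[OF that(1)] that(2) transR by blast
    then show False using assms(5)[OF flip_unique[of \<beta> N]] by blast
  qed
  have Dsub: "D \<subseteq> topspace (prod_topology euclidean Z)" using assms(3) closedin_subset by blast
  have mR: "meager R"
  proof -
    have "BP R" using analytic_BP[OF assms(2) assms(3)] assms(4) by simp
    then obtain U where U: "open U" "meager ((R - U) \<union> (U - R))" unfolding BP_def by blast
    show ?thesis
    proof (cases "U = {}")
      case True
      then show ?thesis using U(2) by simp
    next
      case False
      then obtain a b where ab: "(a, b) \<in> U" by auto
      obtain A B where AB: "open A" "open B" "(a, b) \<in> A \<times> B" "A \<times> B \<subseteq> U"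
        using open_prod_elim[OF U(1) ab] by metis
      obtain N1 where N1: "cyl N1 a \<subseteq> A" using cyl_in_open[OF AB(1)] AB(3) by blast
      obtain N2 where N2: "cyl N2 b \<subseteq> B" using cyl_in_open[OF AB(2)] AB(3) by blast
      define N where "N = max N1 N2"
      define Q where "Q = cyl N a \<times> cyl N b"
      have cA: "cyl N a \<subseteq> A" unfolding N_def using cyl_mono[of N1 "max N1 N2" a] N1 by simp
      have cB: "cyl N b \<subseteq> B" unfolding N_def using cyl_mono[of N2 "max N1 N2" b] N2 by simp
      have "Q \<subseteq> A \<times> B" unfolding Q_def using cA cB by (rule Sigma_mono)
      then have QU: "Q \<subseteq> U" using AB(4) by (rule order_trans)
      have oQ: "open Q" unfolding Q_def by (intro open_Times open_cyl)
      have qQ: "(a, b) \<in> Q" unfolding Q_def cyl_def by simp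
      define g where "g = (\<lambda>p :: cantor \<times> cantor. (fst p, flip N (snd p)))"
      have cg: "continuous_on UNIV g" unfolding g_def
        by (intro continuous_on_Pair continuous_on_fst continuous_on_compose2[OF continuous_flip continuous_on_snd]) auto
      have ig: "g (g x) = x" for x unfolding g_def by simp
      have gQ: "g x \<in> Q" if "x \<in> Q" for x using that flip_cyl unfolding Q_def g_def by (cases x) auto
      have S: "g x \<notin> R" if "x \<in> Q" "x \<in> R" for x
      proof
        assume "g x \<in> R"
        then show False using hR[of "fst x" "snd x" N] that(2) unfolding g_def by (cases x) auto
      qed
      have "meager (Q - R)" using QU U(2) meager_subset[of "(R - U) \<union> (U - R)" "Q - R"] by blast
      then have False using flip_contra[OF cs2 hs2 cg ig oQ qQ gQ S] by blast
      then show ?thesis by blast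
    qed
  qed
  have uc: "uncountable (UNIV // R)"
  proof
    assume cnt: "countable (UNIV // R)"
    have mX: "meager X" if X: "X \<in> UNIV // R" for X
    proof -
      obtain a where a: "X = R `` {a}" using X by (auto elim: quotientE)
      define h where "h = (\<lambda>p :: cantor \<times> 'z. ((a, fst p), snd p))"
      have ch: "continuous_map (prod_topology euclidean Z) (prod_topology (prod_topology euclidean euclidean) Z) h"
        unfolding h_def by (intro continuous_map_pairedI continuous_map_fst continuous_map_snd) (auto simp: continuous_map_const)
      define D' where "D' = {p \<in> topspace (prod_topology euclidean Z). h p \<in> D}"
      have cD': "closedin (prod_topology euclidean Z) D'"
        unfolding D'_def using closedin_continuous_map_preimage[OF ch] assms(3) by simp
      have "fst ` D' = X"
      proof (rule set_eqI)
        fix \<beta>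
        have "\<beta> \<in> X \<longleftrightarrow> (\<exists>z. ((a, \<beta>), z) \<in> D)" unfolding a assms(4) by (force simp: image_iff)
        also have "\<dots> \<longleftrightarrow> (\<exists>z. (\<beta>, z) \<in> D')"
          unfolding D'_def h_def using Dsub by auto
        also have "\<dots> \<longleftrightarrow> \<beta> \<in> fst ` D'" by (force simp: image_iff)
        finally show "\<beta> \<in> fst ` D' \<longleftrightarrow> \<beta> \<in> X" by simp
      qed
      then have "BP X" using analytic_BP[OF assms(2) cD'] by simp
      then obtain W where W: "open W" "meager ((X - W) \<union> (W - X))" unfolding BP_def by blast
      show ?thesis
      proof (cases "W = {}")
        case True
        then show ?thesis using W(2) by simp
      next
        case False
        then obtain c where c: "c \<in> W" by auto
        obtain N where N: "cyl N c \<subseteq> W" using cyl_in_open[OF W(1) c] by blast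
        have S: "flip N x \<notin> X" if "x \<in> cyl N c" "x \<in> X" for x
        proof
          assume "flip N x \<in> X"
          then show False using hR[of a x N] that(2) unfolding a by auto
        qed
        have mQ: "meager (cyl N c - X)" using N W(2) meager_subset[of "(X - W) \<union> (W - X)" "cyl N c - X"] by blast
        have cQ: "c \<in> cyl N c" unfolding cyl_def by simp
        have False by (rule flip_contra[OF cs hs continuous_flip[of N] flip_flip open_cyl[of N c] cQ flip_cyl S mQ])
        then show ?thesis by blast
      qed
    qed
    have "meager (\<Union>X\<in>UNIV // R. X)" by (rule meager_UN[OF cnt]) (rule mX)
    then have "meager (UNIV :: cantor set)" using Union_quotient[OF assms(1)] by simp
    then have "interior (UNIV :: cantor set) = {}" by (rule baire_meager[OF cs hs])
    then show False by simp
  qed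
  show ?thesis using mR uc by blast
qed

end
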